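(* Let $K$ be an algebraically closed field of characteristic zero, $\mathcal{K}=K(t)$, and $\phi_2(z) := \frac{(t+1)(z-1)}{z+t}$, viewed as a self-map of $\mathbb{P}^1(\mathcal{K})$. Let $k \ge 1$. Then $v_\infty(\phi_2^k(0)) = v_\infty(\phi_2^k(1/2)) = 0$, and $v_\infty(k\phi_2^k(\infty) - t) \ge 0$.
   Context: For $g \in K(t)$, $v_\infty(g) = \deg(\text{denominator}) - \deg(\text{numerator})$ (the valuation at the place $t=\infty$). Note $\phi_2(\infty) = t+1$. *)

theory Defs
  imports "HOL-Computational_Algebra.Computational_Algebra" "HOL-Library.Extended_Real"
begin

type_synonym 'a ratfun = "'a poly fract"

definition tvar :: "'a::field ratfun" where
  "tvar = Fract [:0, 1:] 1"

definition v_inf :: "'a::field ratfun \<Rightarrow> ereal" where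
  "v_inf g = (if g = 0 then \<infinity>
     else (let (p, q) = (SOME (p, q). q \<noteq> 0 \<and> g = Fract p q)
           in ereal (int (degree q) - int (degree p))))"

(* P^1(K(t)) as 'a ratfun option, with None the point at infinity.
   phi2(z) = (t+1)(z-1)/(z+t), phi2(-t) = infinity, phi2(infinity) = t+1. *)
definition phi2 :: "'a::field ratfun option \<Rightarrow> 'a ratfun option" where
  "phi2 P = (case P of
      None \<Rightarrow> Some (tvar + 1)
    | Some z \<Rightarrow> (if z + tvar = 0 then None
                 else Some ((tvar + 1) * (z - 1) / (z + tvar))))"

end

theory Submission
  imports Defs
begin

definition e :: "'a::field poly \<Rightarrow> 'a ratfun" where "e p = Fract p 1"

lemma e_add: "e (p + q) = e p + e q" by (simp add: e_def)
lemma e_diff: "e (p - q) = e p - e q" by (simp add: e_def)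
lemma e_mult: "e (p * q) = e p * e q" by (simp add: e_def)
lemma e_one: "e 1 = 1" by (simp add: e_def One_fract_def)
lemma e_zero: "e 0 = 0" by (simp add: e_def Zero_fract_def)
lemma e_eq0: "e p = 0 \<longleftrightarrow> p = 0" by (simp add: e_def Zero_fract_def eq_fract)
lemma Fract_e: "q \<noteq> 0 \<Longrightarrow> Fract p q = e p / e q" by (simp add: e_def)
lemma tvar_e: "tvar = e [:0,1:]" by (simp add: e_def tvar_def)
lemma e_pCons0: "e (pCons 0 q) = tvar * e q"
  by (simp add: tvar_e e_mult[symmetric])

lemma v_inf_Fract:
  assumes "q \<noteq> 0" "p \<noteq> 0"
  shows "v_inf (Fract p q :: 'a::field ratfun) = ereal (int (degree q) - int (degree p))"
proof -
  have ne: "Fract p q \<noteq> 0" using assms by (simp add: Zero_fract_def eq_fract)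
  have ex: "\<exists>x. (case x of (p', q') \<Rightarrow> q' \<noteq> 0 \<and> Fract p q = Fract p' q')"
    using assms by auto
  define x where "x = (SOME (p', q'). q' \<noteq> 0 \<and> Fract p q = Fract p' q')"
  obtain p' q' where pq0: "x = (p', q')" by (cases x) blast
  have pq: "(p', q') = (SOME (p', q'). q' \<noteq> 0 \<and> Fract p q = Fract p' q')"
    using pq0 x_def by simp
  have h: "q' \<noteq> 0 \<and> Fract p q = Fract p' q'"
    using someI_ex[OF ex] pq by (metis (mono_tags, lifting) case_prod_conv)
  hence eq: "p * q' = p' * q" using assms eq_fract(1) by blast
  have "p' \<noteq> 0" using eq assms h by auto
  hence "degree p + degree q' = degree p' + degree q"
    using degree_mult_eq[of p q'] degree_mult_eq[of p' q] eq assms h by auto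
  moreover have "v_inf (Fract p q) = ereal (int (degree q') - int (degree p'))"
    unfolding v_inf_def using ne pq[symmetric] by (simp add: case_prod_beta)
  ultimately show ?thesis by simp
qed

definition invA :: "'a::field ratfun option \<Rightarrow> 'a \<Rightarrow> bool" where
  "invA z c = (\<exists>p q n. z = Some (Fract p q) \<and> q \<noteq> 0 \<and> degree q = n \<and> degree p \<le> n
               \<and> coeff p n = c * lead_coeff q)"

lemma field_aux: "(b::'a::field) \<noteq> 0 \<Longrightarrow> a + T * b \<noteq> 0 \<Longrightarrow>
   (T + 1) * (a / b - 1) / (a / b + T) = ((T + 1) * (a - b)) / (a + T * b)"
proof -
  assume b: "b \<noteq> 0" and ab: "a + T * b \<noteq> 0"
  have 1: "a / b + T = (a + T * b) / b" using b by (simp add: field_simps)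
  have 2: "(T + 1) * (a / b - 1) = (T + 1) * (a - b) / b" using b by (simp add: field_simps)
  show ?thesis unfolding 1 2 using b ab by simp
qed

lemma phi2_Some: "q \<noteq> 0 \<Longrightarrow> p + [:0,1:] * q \<noteq> 0 \<Longrightarrow>
  phi2 (Some (Fract p q :: 'a::field ratfun)) = Some (Fract ([:1,1:] * (p - q)) (p + [:0,1:] * q))"
proof -
  assume q: "q \<noteq> 0" and Q: "p + [:0,1:] * q \<noteq> 0"
  have eq0: "e q \<noteq> 0" "e (p + [:0,1:] * q) \<noteq> 0" using q Q by (simp_all add: e_eq0)
  have eQ: "e (p + [:0,1:] * q) = e p + tvar * e q" by (simp only: e_add e_mult tvar_e)
  have s: "Fract p q + tvar = e (p + [:0,1:] * q) / e q"
    using eq0 by (simp add: Fract_e q e_add e_pCons0 field_simps)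
  have ne: "Fract p q + tvar \<noteq> 0" using s eq0 by simp
  have e11: "e [:1,1:] = tvar + 1" by (simp add: tvar_e e_def One_fract_def one_pCons)
  have "Fract ([:1,1:] * (p - q)) (p + [:0,1:] * q) = ((tvar + 1) * (e p - e q)) / (e p + tvar * e q)"
    unfolding Fract_e[OF Q] eQ e_mult e_diff e11 ..
  also have "\<dots> = (tvar + 1) * (e p / e q - 1) / (e p / e q + tvar)"
    using field_aux[OF eq0(1), of "e p" tvar] eq0(2) unfolding eQ by simp
  finally show ?thesis unfolding phi2_def using ne by (simp add: Fract_e[OF q])
qed

lemma stepA: assumes "invA z c" shows "invA (phi2 z) (c - 1)"
proof -
  obtain p q n where z: "z = Some (Fract p q)" and q: "q \<noteq> 0" and dq: "degree q = n"
    and dp: "degree p \<le> n" and cp: "coeff p n = c * lead_coeff q"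
    using assms unfolding invA_def by blast
  define Q where "Q = p + [:0,1:] * q"
  define P where "P = [:1,1:] * (p - q)"
  have cQ: "coeff Q (Suc n) = lead_coeff q" using dp dq
    by (simp add: Q_def coeff_pCons coeff_eq_0)
  hence Q0: "Q \<noteq> 0" using q by auto
  have dQ: "degree Q = Suc n"
  proof (rule antisym)
    show "degree Q \<le> Suc n" unfolding Q_def using dp dq
      by (intro degree_add_le) (auto intro: order.trans[OF degree_mult_le])
    show "Suc n \<le> degree Q" using cQ q by (metis le_degree leading_coeff_0_iff)
  qed
  have dP: "degree P \<le> Suc n" unfolding P_def using dp dq
    by (intro order.trans[OF degree_mult_le]) (auto intro: order.trans[OF degree_diff_le])
  have z1: "coeff p (Suc n) = 0" "coeff q (Suc n) = 0" using dp dq by (auto intro: coeff_eq_0)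
  have cP: "coeff P (Suc n) = (c - 1) * lead_coeff Q"
    using dQ cQ cp dq dp z1 by (simp add: P_def coeff_pCons algebra_simps)
  have "phi2 z = Some (Fract P Q)"
    using z phi2_Some[OF q Q0[unfolded Q_def]] by (simp only: P_def Q_def)
  thus ?thesis unfolding invA_def
    using Q0 dQ dP cP by blast
qed

lemma iterA: "invA z c \<Longrightarrow> invA ((phi2 ^^ k) z) (c - of_nat k)"
  by (induct k) (auto dest: stepA simp: algebra_simps)

lemma finalA: assumes "invA z c" "c \<noteq> 0"
  shows "\<exists>a. z = Some a \<and> v_inf a = 0"
proof -
  obtain p q n where z: "z = Some (Fract p q)" and q: "q \<noteq> 0" and dq: "degree q = n"
    and dp: "degree p \<le> n" and cp: "coeff p n = c * lead_coeff q"
    using assms unfolding invA_def by blast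
  have "coeff p n \<noteq> 0" using cp assms q by simp
  hence "degree p = n" "p \<noteq> 0" using dp le_degree by (auto intro: antisym)
  thus ?thesis using z v_inf_Fract[OF q] dq by auto
qed

lemma coeff_of_nat_mult: "coeff (of_nat k * p) i = of_nat k * coeff (p :: 'a::comm_ring_1 poly) i"
  by (induct k) (simp_all add: algebra_simps)

lemma of_nat_mult_smult: "of_nat m * (x :: 'a::comm_ring_1 poly) = smult (of_nat m) x"
  by (induct m) (simp_all add: algebra_simps smult_add_left)

definition invB :: "'a::field_char_0 ratfun option \<Rightarrow> nat \<Rightarrow> bool" where
  "invB z k = (\<exists>p q n. z = Some (Fract p q) \<and> q \<noteq> 0 \<and> degree q = n \<and> degree p \<le> Suc n
               \<and> degree (of_nat k * p - [:0,1:] * q) \<le> n \<and> k \<ge> 1)"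

lemma stepB: assumes "invB z k" shows "invB (phi2 z) (Suc k)"
proof -
  obtain p q n where z: "z = Some (Fract p q)" and q: "q \<noteq> 0" and dq: "degree q = n"
    and dp: "degree p \<le> Suc n" and dr: "degree (of_nat k * p - [:0,1:] * q) \<le> n"
    and k: "k \<ge> 1"
    using assms unfolding invB_def by blast
  define Q where "Q = p + [:0,1:] * q"
  define P where "P = [:1,1:] * (p - q)"
  define r where "r = of_nat k * p - [:0,1:] * q"
  have c0: "coeff r (Suc n) = 0" using dr unfolding r_def[symmetric] by (intro coeff_eq_0) simp
  have "coeff r (Suc n) = of_nat k * coeff p (Suc n) - lead_coeff q"
    by (simp add: r_def dq coeff_of_nat_mult)
  hence cr: "of_nat k * coeff p (Suc n) = lead_coeff q" using c0 by simp
  have cQ: "coeff Q (Suc n) = coeff p (Suc n) + lead_coeff q" using dq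
    by (simp add: Q_def coeff_pCons)
  have kne: "(of_nat k :: 'a) \<noteq> 0" using k by simp
  have "coeff p (Suc n) \<noteq> 0" using cr q kne by auto
  have cQ': "coeff Q (Suc n) = (1 + of_nat k) * coeff p (Suc n)" using cQ cr
    by (simp add: algebra_simps)
  have "(1 + of_nat k :: 'a) \<noteq> 0" 
  proof -
    have "(1 + of_nat k :: 'a) = of_nat (Suc k)" by simp
    thus ?thesis by (simp only: of_nat_eq_0_iff)
  qed
  hence cQ0: "coeff Q (Suc n) \<noteq> 0" using cQ' \<open>coeff p (Suc n) \<noteq> 0\<close> by simp
  hence Q0: "Q \<noteq> 0" by auto
  have dQ: "degree Q = Suc n"
  proof (rule antisym)
    show "degree Q \<le> Suc n" unfolding Q_def using dp dq
      by (intro degree_add_le) (auto intro: order.trans[OF degree_mult_le])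
    show "Suc n \<le> degree Q" using cQ0 by (metis le_degree)
  qed
  have dP: "degree P \<le> Suc (Suc n)" unfolding P_def using dp dq
    by (intro order.trans[OF degree_mult_le]) (auto intro: order.trans[OF degree_diff_le])
  have iden: "of_nat (Suc k) * P - [:0,1:] * Q
      = [:0,1:] * r + of_nat (Suc k) * p - of_nat (Suc k) * ([:1,1:] * q)"
  proof -
    have "[:1,1:] = [:0,1:] + (1::'a poly)" by (simp add: one_pCons)
    thus ?thesis unfolding P_def Q_def r_def by (simp only: of_nat_Suc) (simp add: algebra_simps)
  qed
  have d1: "degree ([:0,1:] * r) \<le> Suc n"
    using dr by (intro order.trans[OF degree_mult_le]) (simp add: r_def)
  have d2: "degree (of_nat (Suc k) * p) \<le> Suc n"
    using dp unfolding of_nat_mult_smult by (intro order.trans[OF degree_smult_le])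
  have d3: "degree (of_nat (Suc k) * ([:1,1:] * q)) \<le> Suc n"
    using dq unfolding of_nat_mult_smult
    by (intro order.trans[OF degree_smult_le] order.trans[OF degree_mult_le]) simp
  have dR: "degree (of_nat (Suc k) * P - [:0,1:] * Q) \<le> Suc n"
    unfolding iden by (rule degree_diff_le[OF degree_add_le[OF d1 d2] d3])
  have "phi2 z = Some (Fract P Q)"
    using z phi2_Some[OF q Q0[unfolded Q_def]] by (simp only: P_def Q_def)
  thus ?thesis unfolding invB_def
    using Q0 dQ dP dR by (intro exI[of _ P] exI[of _ Q] exI[of _ "Suc n"]) auto
qed

lemma baseB: "invB (phi2 None :: 'a::field_char_0 ratfun option) 1"
proof -
  have "phi2 None = Some (Fract [:1,1:] (1::'a poly))"
    by (simp add: phi2_def tvar_def One_fract_def one_pCons)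
  moreover have "degree (of_nat 1 * [:1,1:] - [:0,1:] * (1::'a poly)) \<le> 0"
    by (simp add: one_pCons)
  ultimately show ?thesis unfolding invB_def
    by (intro exI[of _ "[:1,1:]"] exI[of _ 1] exI[of _ 0]) auto
qed

lemma iterB: "invB ((phi2 ^^ Suc m) (None :: 'a::field_char_0 ratfun option)) (Suc m)"
proof (induct m)
  case 0 thus ?case using baseB by simp
next
  case (Suc m)
  have "(phi2 ^^ Suc (Suc m)) (None :: 'a ratfun option) = phi2 ((phi2 ^^ Suc m) None)" by simp
  thus ?case using stepB[OF Suc] by simp
qed

lemma finalB: assumes "invB z k"
  shows "\<exists>c. z = Some c \<and> v_inf (of_nat k * c - tvar) \<ge> 0"
proof -
  obtain p q n where z: "z = Some (Fract p q)" and q: "q \<noteq> 0" and dq: "degree q = n"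
    and dr: "degree (of_nat k * p - [:0,1:] * q) \<le> n"
    using assms unfolding invB_def by blast
  define r where "r = of_nat k * p - [:0,1:] * q"
  have ok: "of_nat k = e (of_nat k)" by (simp add: e_def of_nat_fract)
  have eq: "e q \<noteq> 0" using q by (simp add: e_eq0)
  have "of_nat k * Fract p q - tvar = Fract r q"
    unfolding Fract_e[OF q] ok r_def e_diff e_mult tvar_e using eq by (simp add: field_simps)
  moreover have "v_inf (Fract r q) \<ge> 0"
  proof (cases "r = 0")
    case True thus ?thesis by (simp add: v_inf_def fract_collapse)
  next
    case False thus ?thesis using v_inf_Fract[OF q False] dr dq by (simp add: r_def)
  qed
  ultimately show ?thesis using z by auto
qed

theorem lemma5p16:
  fixes k :: nat
  assumes "k \<ge> 1"
  shows "\<exists>(a::'K::{alg_closed_field, field_char_0} ratfun) (b::'K ratfun) (c::'K ratfun).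
           (phi2 ^^ k) (Some 0) = Some a \<and> v_inf a = 0 \<and>
           (phi2 ^^ k) (Some (1 / 2)) = Some b \<and> v_inf b = 0 \<and>
           (phi2 ^^ k) None = Some c \<and> v_inf (of_nat k * c - tvar) \<ge> 0"
proof -
  have A0: "invA (Some (0::'K ratfun)) 0" unfolding invA_def
    by (intro exI[of _ 0] exI[of _ 1] exI[of _ 0]) (simp add: Zero_fract_def)
  have h: "(1/2 :: 'K ratfun) = Fract 1 [:2:]"
  proof -
    have h2: "[:2:] = (1 + 1 :: 'K poly)" by (simp add: one_pCons)
    have p2: "(of_nat 2 :: 'K poly) = [:2:]" by (simp add: of_nat_poly)
    have "(2 :: 'K ratfun) = of_nat 2" by simp
    also have "\<dots> = Fract (of_nat 2) 1" by (rule of_nat_fract)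
    finally have "e [:2:] = (2 :: 'K ratfun)" unfolding p2 e_def by simp
    thus ?thesis by (simp add: Fract_e e_one)
  qed
  have A1: "invA (Some (1/2::'K ratfun)) (1/2)" unfolding invA_def h
    by (intro exI[of _ 1] exI[of _ "[:2:]"] exI[of _ 0]) simp
  have k0: "(0::'K) - of_nat k \<noteq> 0" using assms by simp
  obtain a :: "'K ratfun" where a: "(phi2 ^^ k) (Some 0) = Some a" "v_inf a = 0"
    using finalA[OF iterA[OF A0, of k] k0] by auto
  have "(1/2 :: 'K) - of_nat k \<noteq> 0"
  proof
    assume "(1/2 :: 'K) - of_nat k = 0"
    hence "(1::'K) = of_nat (2*k)" by (simp add: field_simps)
    hence "(of_nat 1 :: 'K) = of_nat (2*k)" by simp
    hence "1 = 2*k" using of_nat_eq_iff by blast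
    thus False by presburger
  qed
  then obtain b :: "'K ratfun" where b: "(phi2 ^^ k) (Some (1/2)) = Some b" "v_inf b = 0"
    using finalA[OF iterA[OF A1, of k]] by auto
  obtain m where m: "k = Suc m" using assms by (cases k) auto
  obtain c :: "'K ratfun" where c: "(phi2 ^^ k) None = Some c" "v_inf (of_nat k * c - tvar) \<ge> 0"
    using finalB[OF iterB[of m]] m by auto
  show ?thesis using a b c by blast
qed

end
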